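(* Let $L$ be an Abelian group, $\mathcal{B}$ an $L$-graded algebra, and $\psi,\psi'$ bilinear forms on $L$ with $\psi(a,b)+\psi(b,a)\equiv\psi'(a,b)+\psi'(b,a)\pmod 2$ for all $a,b\in L$. Let $V\subset\mathcal{B}$ be an $L$-graded subspace. Let $\mathfrak{g}$ be the Lie subalgebra generated by $V$ for the commutator bracket $[-,-]_\psi$ of the $\psi$-twisted multiplication, and $\mathfrak{g}'$ the Lie subalgebra generated by $V$ for the commutator bracket $[-,-]_{\psi'}$ of the $\psi'$-twisted multiplication. Then $\mathfrak{g}=\mathfrak{g}'$ as vector subspaces of $\mathcal{B}$.
   Context: For a bilinear form $\psi$ on $L$, the $\psi$-twisted multiplication on $\mathcal{B}$ is $m^\psi_{a,b}=(-1)^{\psi(a,b)}m_{a,b}$ on homogeneous elements of degrees $a,b$, and $[x,y]_\psi=m^\psi(x,y)-m^\psi(y,x)$. *)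

theory Defs
  imports Main "HOL.Vector_Spaces"
begin

definition sgnpow :: "int \<Rightarrow> 'k::field" where
  "sgnpow n = (if even n then 1 else -1)"

definition gsupp :: "('l \<Rightarrow> 'b \<Rightarrow> 'b::zero) \<Rightarrow> 'b \<Rightarrow> 'l set" where
  "gsupp pr x = {a. pr a x \<noteq> 0}"

text \<open>An L-graded (associative) k-algebra: B is a k-vector space (via scale) and a ring
  whose multiplication is k-bilinear; pr a is the projection onto the degree-a
  component of the direct sum decomposition B = (+)_a B_a, with B_a B_b \<subseteq> B_(a+b).\<close>
definition graded_algebra ::
  "('k::field \<Rightarrow> 'b::ring \<Rightarrow> 'b) \<Rightarrow> ('l::ab_group_add \<Rightarrow> 'b \<Rightarrow> 'b) \<Rightarrow> bool" where
  "graded_algebra scale pr \<longleftrightarrow>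
     vector_space scale \<and>
     (\<forall>c x y. scale c (x * y) = scale c x * y \<and> scale c (x * y) = x * scale c y) \<and>
     (\<forall>a. Vector_Spaces.linear scale scale (pr a)) \<and>
     (\<forall>x. finite (gsupp pr x) \<and> x = (\<Sum>a\<in>gsupp pr x. pr a x)) \<and>
     (\<forall>a b x. pr a (pr b x) = (if a = b then pr b x else 0)) \<and>
     (\<forall>a b x y. pr (a + b) (pr a x * pr b y) = pr a x * pr b y)"

definition bilinear_form :: "('l::ab_group_add \<Rightarrow> 'l \<Rightarrow> int) \<Rightarrow> bool" where
  "bilinear_form \<psi> \<longleftrightarrow> (\<forall>a b c. \<psi> (a + b) c = \<psi> a c + \<psi> b c \<and> \<psi> a (b + c) = \<psi> a b + \<psi> a c)"

definition twisted_mult ::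
  "('k::field \<Rightarrow> 'b::ring \<Rightarrow> 'b) \<Rightarrow> ('l \<Rightarrow> 'b \<Rightarrow> 'b) \<Rightarrow> ('l \<Rightarrow> 'l \<Rightarrow> int) \<Rightarrow> 'b \<Rightarrow> 'b \<Rightarrow> 'b" where
  "twisted_mult scale pr \<psi> x y =
     (\<Sum>a\<in>gsupp pr x. \<Sum>b\<in>gsupp pr y. scale (sgnpow (\<psi> a b)) (pr a x * pr b y))"

definition twisted_bracket ::
  "('k::field \<Rightarrow> 'b::ring \<Rightarrow> 'b) \<Rightarrow> ('l \<Rightarrow> 'b \<Rightarrow> 'b) \<Rightarrow> ('l \<Rightarrow> 'l \<Rightarrow> int) \<Rightarrow> 'b \<Rightarrow> 'b \<Rightarrow> 'b" where
  "twisted_bracket scale pr \<psi> x y =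
     twisted_mult scale pr \<psi> x y - twisted_mult scale pr \<psi> y x"

definition generated_lie_subalgebra ::
  "('k::field \<Rightarrow> 'b::ab_group_add \<Rightarrow> 'b) \<Rightarrow> ('b \<Rightarrow> 'b \<Rightarrow> 'b) \<Rightarrow> 'b set \<Rightarrow> 'b set" where
  "generated_lie_subalgebra scale br V =
     \<Inter>{S. V \<subseteq> S \<and> module.subspace scale S \<and> (\<forall>x\<in>S. \<forall>y\<in>S. br x y \<in> S)}"

end

theory Submission
  imports Defs
begin

lemma ga_vs: "graded_algebra scale pr \<Longrightarrow> vector_space scale"
  by (simp add: graded_algebra_def)

lemma pr_add: "graded_algebra scale pr \<Longrightarrow> pr a (x + y) = pr a x + pr a y"
  unfolding graded_algebra_def linear_iff by blast

lemma pr_scale: "graded_algebra scale pr \<Longrightarrow> pr a (scale c x) = scale c (pr a x)"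
  unfolding graded_algebra_def linear_iff by blast

lemma pr_0: "graded_algebra scale pr \<Longrightarrow> pr a 0 = 0"
  using pr_add[of scale pr a 0 0] by simp

lemma pr_diff: "graded_algebra scale pr \<Longrightarrow> pr a (x - y) = pr a x - pr a y"
proof -
  assume g: "graded_algebra scale pr"
  have "pr a (x - y) + pr a y = pr a x" using pr_add[OF g, of a "x - y" y] by simp
  thus ?thesis by (simp add: eq_diff_eq)
qed

lemma pr_sum: "graded_algebra scale pr \<Longrightarrow> pr a (sum f A) = (\<Sum>i\<in>A. pr a (f i))"
  by (induct A rule: infinite_finite_induct) (auto simp: pr_0 pr_add)

lemma pr_pr: "graded_algebra scale pr \<Longrightarrow> pr a (pr b x) = (if a = b then pr b x else 0)"
  unfolding graded_algebra_def by blast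

lemma pr_mult: "graded_algebra scale pr \<Longrightarrow> pr (a + b) (pr a x * pr b y) = pr a x * pr b y"
  unfolding graded_algebra_def by blast

lemma supp_fin: "graded_algebra scale pr \<Longrightarrow> finite (gsupp pr x)"
  unfolding graded_algebra_def by blast

lemma supp_pr: "graded_algebra scale pr \<Longrightarrow> gsupp pr (pr a x) \<subseteq> {a}"
  by (auto simp: gsupp_def pr_pr split: if_splits)

lemma mult_superset:
  assumes g: "graded_algebra scale pr" and A: "finite A" "gsupp pr x \<subseteq> A"
    and B: "finite B" "gsupp pr y \<subseteq> B"
  shows "twisted_mult scale pr \<psi> x y =
     (\<Sum>a\<in>A. \<Sum>b\<in>B. scale (sgnpow (\<psi> a b)) (pr a x * pr b y))"
proof -
  interpret vector_space scale using ga_vs[OF g] .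
  have "twisted_mult scale pr \<psi> x y =
     (\<Sum>a\<in>gsupp pr x. \<Sum>b\<in>B. scale (sgnpow (\<psi> a b)) (pr a x * pr b y))"
    unfolding twisted_mult_def
    by (rule sum.cong[OF refl], rule sum.mono_neutral_left[OF B(1) B(2)])
       (auto simp: gsupp_def)
  also have "\<dots> = (\<Sum>a\<in>A. \<Sum>b\<in>B. scale (sgnpow (\<psi> a b)) (pr a x * pr b y))"
    by (rule sum.mono_neutral_left[OF A(1) A(2)]) (auto simp: gsupp_def)
  finally show ?thesis .
qed

lemma mult_hom:
  assumes g: "graded_algebra scale pr"
  shows "twisted_mult scale pr \<psi> (pr a x) (pr b y) = scale (sgnpow (\<psi> a b)) (pr a x * pr b y)"
  using mult_superset[OF g, of "{a}" "pr a x" "{b}" "pr b y" \<psi>] supp_pr[OF g]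
  by (simp add: pr_pr[OF g])

definition hb where
  "hb scale pr \<psi> x y a b = twisted_bracket scale pr \<psi> (pr a x) (pr b y)"

lemma bracket_expand:
  assumes g: "graded_algebra scale pr"
  shows "twisted_bracket scale pr \<psi> x y =
     (\<Sum>a\<in>gsupp pr x. \<Sum>b\<in>gsupp pr y. twisted_bracket scale pr \<psi> (pr a x) (pr b y))"
proof -
  have "twisted_mult scale pr \<psi> y x =
     (\<Sum>b\<in>gsupp pr y. \<Sum>a\<in>gsupp pr x. scale (sgnpow (\<psi> b a)) (pr b y * pr a x))"
    by (simp add: twisted_mult_def)
  also have "\<dots> = (\<Sum>a\<in>gsupp pr x. \<Sum>b\<in>gsupp pr y. scale (sgnpow (\<psi> b a)) (pr b y * pr a x))"
    by (rule sum.swap)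
  finally have e: "twisted_mult scale pr \<psi> y x = \<dots>" .
  have e2: "twisted_mult scale pr \<psi> x y =
     (\<Sum>a\<in>gsupp pr x. \<Sum>b\<in>gsupp pr y. scale (sgnpow (\<psi> a b)) (pr a x * pr b y))"
    by (simp add: twisted_mult_def)
  show ?thesis
    unfolding twisted_bracket_def e e2 mult_hom[OF g]
    by (simp only: sum_subtractf)
qed

lemma bracket_hom_pr:
  assumes g: "graded_algebra scale pr"
  shows "pr c (twisted_bracket scale pr \<psi> (pr a x) (pr b y)) =
     (if c = a + b then twisted_bracket scale pr \<psi> (pr a x) (pr b y) else 0)"
proof -
  interpret vector_space scale using ga_vs[OF g] .
  have m1: "pr c (pr a x * pr b y) = (if c = a + b then pr a x * pr b y else 0)"
    by (metis pr_mult[OF g] pr_pr[OF g])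
  have m2: "pr c (pr b y * pr a x) = (if c = a + b then pr b y * pr a x else 0)"
    by (metis pr_mult[OF g] pr_pr[OF g] add.commute)
  show ?thesis
    unfolding twisted_bracket_def mult_hom[OF g]
    by (simp add: pr_diff[OF g] pr_scale[OF g] m1 m2)
qed

lemma sgn_change:
  assumes "even (\<psi> a b + \<psi> b a - \<psi>' a b - \<psi>' b a)"
  shows "(sgnpow (\<psi>' a b) = (sgnpow (\<psi> a b)::'k::field) \<and> sgnpow (\<psi>' b a) = (sgnpow (\<psi> b a)::'k)) \<or>
         (sgnpow (\<psi>' a b) = - (sgnpow (\<psi> a b)::'k) \<and> sgnpow (\<psi>' b a) = - (sgnpow (\<psi> b a)::'k))"
  using assms unfolding sgnpow_def by (auto simp: even_add even_diff)

lemma bracket_change: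
  fixes scale :: "'k::field \<Rightarrow> 'b::ring \<Rightarrow> 'b"
  assumes g: "graded_algebra scale pr"
    and e: "\<And>a b. even (\<psi> a b + \<psi> b a - \<psi>' a b - \<psi>' b a)"
  shows "twisted_bracket scale pr \<psi>' (pr a x) (pr b y) = twisted_bracket scale pr \<psi> (pr a x) (pr b y)
       \<or> twisted_bracket scale pr \<psi>' (pr a x) (pr b y) = - twisted_bracket scale pr \<psi> (pr a x) (pr b y)"
proof -
  interpret vector_space scale using ga_vs[OF g] .
  from sgn_change[of \<psi> a b \<psi>', OF e[of a b], where 'k='k]
  show ?thesis
  proof (elim disjE conjE)
    assume "sgnpow (\<psi>' a b) = (sgnpow (\<psi> a b) :: 'k)" "sgnpow (\<psi>' b a) = (sgnpow (\<psi> b a) :: 'k)"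
    then show ?thesis by (intro disjI1) (simp add: twisted_bracket_def mult_hom[OF g])
  next
    assume "sgnpow (\<psi>' a b) = - (sgnpow (\<psi> a b) :: 'k)" "sgnpow (\<psi>' b a) = - (sgnpow (\<psi> b a) :: 'k)"
    then show ?thesis by (intro disjI2) (simp add: twisted_bracket_def mult_hom[OF g] scale_minus_left)
  qed
qed

lemma gen_props:
  assumes vs: "vector_space scale"
  shows "module.subspace scale (generated_lie_subalgebra scale br V)"
    and "V \<subseteq> generated_lie_subalgebra scale br V"
    and "x \<in> generated_lie_subalgebra scale br V \<Longrightarrow> y \<in> generated_lie_subalgebra scale br V
         \<Longrightarrow> br x y \<in> generated_lie_subalgebra scale br V"
    and "V \<subseteq> S \<Longrightarrow> module.subspace scale S \<Longrightarrow> (\<forall>x\<in>S. \<forall>y\<in>S. br x y \<in> S)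
         \<Longrightarrow> generated_lie_subalgebra scale br V \<subseteq> S"
proof -
  interpret vector_space scale by (rule vs)
  show "subspace (generated_lie_subalgebra scale br V)"
    unfolding generated_lie_subalgebra_def by (rule subspace_Inter) blast
  show "V \<subseteq> generated_lie_subalgebra scale br V"
    unfolding generated_lie_subalgebra_def by blast
  show "x \<in> generated_lie_subalgebra scale br V \<Longrightarrow> y \<in> generated_lie_subalgebra scale br V
         \<Longrightarrow> br x y \<in> generated_lie_subalgebra scale br V"
    unfolding generated_lie_subalgebra_def by blast
  show "V \<subseteq> S \<Longrightarrow> subspace S \<Longrightarrow> (\<forall>x\<in>S. \<forall>y\<in>S. br x y \<in> S)
         \<Longrightarrow> generated_lie_subalgebra scale br V \<subseteq> S"
    unfolding generated_lie_subalgebra_def by blast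
qed

lemma gen_graded:
  assumes g: "graded_algebra scale pr"
    and V: "module.subspace scale V" "\<And>a x. x \<in> V \<Longrightarrow> pr a x \<in> V"
  shows "x \<in> generated_lie_subalgebra scale (twisted_bracket scale pr \<psi>) V
     \<Longrightarrow> pr c x \<in> generated_lie_subalgebra scale (twisted_bracket scale pr \<psi>) V"
proof -
  interpret vector_space scale using ga_vs[OF g] .
  let ?br = "twisted_bracket scale pr \<psi>"
  let ?G = "generated_lie_subalgebra scale ?br V"
  note GP = gen_props[OF ga_vs[OF g], where br="?br" and V=V]
  let ?S = "{x \<in> ?G. \<forall>c. pr c x \<in> ?G}"
  have "?G \<subseteq> ?S"
  proof (rule GP(4))
    show "V \<subseteq> ?S" using GP(2) V(2) by blast
    show "subspace ?S"
    proof (rule subspaceI)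
      show "0 \<in> ?S" using subspace_0[OF GP(1)] by (simp add: pr_0[OF g])
      show "x + y \<in> ?S" if "x \<in> ?S" "y \<in> ?S" for x y
        using that subspace_add[OF GP(1)] by (simp add: pr_add[OF g])
      show "scale c x \<in> ?S" if "x \<in> ?S" for c x
        using that subspace_scale[OF GP(1)] by (simp add: pr_scale[OF g])
    qed
    show "\<forall>x\<in>?S. \<forall>y\<in>?S. ?br x y \<in> ?S"
    proof (intro ballI)
      fix x y assume x: "x \<in> ?S" and y: "y \<in> ?S"
      have "?br x y \<in> ?G" using x y GP(3) by blast
      moreover have "pr c (?br x y) \<in> ?G" for c
      proof -
        have "pr c (?br x y) = (\<Sum>a\<in>gsupp pr x. \<Sum>b\<in>gsupp pr y.
           (if c = a + b then ?br (pr a x) (pr b y) else 0))"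
          by (subst bracket_expand[OF g]) (simp add: pr_sum[OF g] bracket_hom_pr[OF g])
        also have "\<dots> \<in> ?G"
          using x y by (auto intro!: subspace_sum[OF GP(1)] GP(3) simp: subspace_0[OF GP(1)])
        finally show ?thesis .
      qed
      ultimately show "?br x y \<in> ?S" by blast
    qed
  qed
  then show "x \<in> ?G \<Longrightarrow> pr c x \<in> ?G" by blast
qed

lemma gen_sub:
  fixes scale :: "'k::field \<Rightarrow> 'b::ring \<Rightarrow> 'b"
  assumes g: "graded_algebra scale pr"
    and e: "\<And>a b. even (\<psi> a b + \<psi> b a - \<psi>' a b - \<psi>' b a)"
    and V: "module.subspace scale V" "\<And>a x. x \<in> V \<Longrightarrow> pr a x \<in> V"
  shows "generated_lie_subalgebra scale (twisted_bracket scale pr \<psi>) V \<subseteq>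
         generated_lie_subalgebra scale (twisted_bracket scale pr \<psi>') V"
proof -
  interpret vector_space scale using ga_vs[OF g] .
  let ?br = "twisted_bracket scale pr \<psi>'"
  let ?G = "generated_lie_subalgebra scale ?br V"
  note GP = gen_props[OF ga_vs[OF g], where br="?br" and V=V]
  have e': "even (\<psi>' a b + \<psi>' b a - \<psi> a b - \<psi> b a)" for a b
  proof -
    have "\<psi>' a b + \<psi>' b a - \<psi> a b - \<psi> b a = - (\<psi> a b + \<psi> b a - \<psi>' a b - \<psi>' b a)" by simp
    thus ?thesis using e[of a b] by (simp only: even_minus)
  qed
  show ?thesis
  proof (rule gen_props(4)[OF ga_vs[OF g]])
    show "V \<subseteq> ?G" by (rule GP(2))
    show "subspace ?G" by (rule GP(1))
    show "\<forall>x\<in>?G. \<forall>y\<in>?G. twisted_bracket scale pr \<psi> x y \<in> ?G"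
    proof (intro ballI)
      fix x y assume x: "x \<in> ?G" and y: "y \<in> ?G"
      have h: "twisted_bracket scale pr \<psi> (pr a x) (pr b y) \<in> ?G" for a b
      proof -
        have px: "pr a x \<in> ?G" and py: "pr b y \<in> ?G"
          using gen_graded[OF g V] x y by blast+
        have br: "?br (pr a x) (pr b y) \<in> ?G" using GP(3)[OF px py] .
        from bracket_change[where \<psi>="\<psi>'" and \<psi>'="\<psi>" and a=a and b=b and x=x and y=y, OF g e']
        show ?thesis
        proof
          assume "twisted_bracket scale pr \<psi> (pr a x) (pr b y) = ?br (pr a x) (pr b y)"
          thus ?thesis using br by simp
        next
          assume "twisted_bracket scale pr \<psi> (pr a x) (pr b y) = - ?br (pr a x) (pr b y)"
          thus ?thesis using subspace_neg[OF GP(1) br] by simp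
        qed
      qed
      show "twisted_bracket scale pr \<psi> x y \<in> ?G"
        by (subst bracket_expand[OF g]) (auto intro!: subspace_sum[OF GP(1)] h)
    qed
  qed
qed

theorem lemma10p11:
  fixes scale :: "'k::field \<Rightarrow> 'b::ring \<Rightarrow> 'b"
    and pr :: "'l::ab_group_add \<Rightarrow> 'b \<Rightarrow> 'b"
    and \<psi> \<psi>' :: "'l \<Rightarrow> 'l \<Rightarrow> int"
    and V :: "'b set"
  assumes "graded_algebra scale pr"
    and "bilinear_form \<psi>" and "bilinear_form \<psi>'"
    and "\<And>a b. even (\<psi> a b + \<psi> b a - \<psi>' a b - \<psi>' b a)"
    and "module.subspace scale V"
    and "\<And>a x. x \<in> V \<Longrightarrow> pr a x \<in> V"
  shows "generated_lie_subalgebra scale (twisted_bracket scale pr \<psi>) V =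
         generated_lie_subalgebra scale (twisted_bracket scale pr \<psi>') V"
proof -
  have e': "even (\<psi>' a b + \<psi>' b a - \<psi> a b - \<psi> b a)" for a b
  proof -
    have "\<psi>' a b + \<psi>' b a - \<psi> a b - \<psi> b a = - (\<psi> a b + \<psi> b a - \<psi>' a b - \<psi>' b a)" by simp
    thus ?thesis using assms(4)[of a b] by (simp only: even_minus)
  qed
  show ?thesis
    using gen_sub[where \<psi>=\<psi> and \<psi>'="\<psi>'" and V=V and pr=pr, OF assms(1) assms(4) assms(5,6)]
      gen_sub[where \<psi>="\<psi>'" and \<psi>'=\<psi> and V=V and pr=pr, OF assms(1) e' assms(5,6)]
    by blast
qed

end
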